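(* Let $S$ be an AG-groupoid with a left identity. The following are equivalent: (i) every bi-ideal $B$ of $S$ is idempotent, i.e. $B^{2}=B$; (ii) $A\cap B=AB$ for all bi-ideals $A,B$ of $S$; (iii) the set $L_S$ of bi-ideals of $S$, with the operation $A\wedge B=AB$, is a semilattice (i.e. $\wedge$ is a well-defined operation on $L_S$ which is commutative, associative and idempotent).
   Context: An AG-groupoid is a set $S$ with a binary operation satisfying $(ab)c=(cb)a$ for all $a,b,c\in S$. A left identity is an element $e$ with $ea=a$ for all $a\in S$. For nonempty subsets, $AB=\{ab:a\in A,b\in B\}$, $B^{2}=BB$. A bi-ideal of $S$ is a nonempty subset $B$ with $BB\subseteq B$ and $(BS)B\subseteq B$. *)

theory Defs
  imports Main
begin

definition AG_groupoid :: "'a set \<Rightarrow> ('a \<Rightarrow> 'a \<Rightarrow> 'a) \<Rightarrow> bool" where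
  "AG_groupoid S m \<longleftrightarrow> (\<forall>a\<in>S. \<forall>b\<in>S. m a b \<in> S) \<and>
     (\<forall>a\<in>S. \<forall>b\<in>S. \<forall>c\<in>S. m (m a b) c = m (m c b) a)"

definition left_identity :: "'a set \<Rightarrow> ('a \<Rightarrow> 'a \<Rightarrow> 'a) \<Rightarrow> 'a \<Rightarrow> bool" where
  "left_identity S m e \<longleftrightarrow> e \<in> S \<and> (\<forall>a\<in>S. m e a = a)"

definition setmult :: "('a \<Rightarrow> 'a \<Rightarrow> 'a) \<Rightarrow> 'a set \<Rightarrow> 'a set \<Rightarrow> 'a set" where
  "setmult m A B = {m a b | a b. a \<in> A \<and> b \<in> B}"

definition bi_ideal :: "'a set \<Rightarrow> ('a \<Rightarrow> 'a \<Rightarrow> 'a) \<Rightarrow> 'a set \<Rightarrow> bool" where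
  "bi_ideal S m B \<longleftrightarrow> B \<subseteq> S \<and> B \<noteq> {} \<and> setmult m B B \<subseteq> B \<and>
     setmult m (setmult m B S) B \<subseteq> B"

definition bi_ideal_semilattice :: "'a set \<Rightarrow> ('a \<Rightarrow> 'a \<Rightarrow> 'a) \<Rightarrow> bool" where
  "bi_ideal_semilattice S m \<longleftrightarrow>
     (let L = {B. bi_ideal S m B} in
       (\<forall>A\<in>L. \<forall>B\<in>L. setmult m A B \<in> L) \<and>
       (\<forall>A\<in>L. \<forall>B\<in>L. setmult m A B = setmult m B A) \<and>
       (\<forall>A\<in>L. \<forall>B\<in>L. \<forall>C\<in>L. setmult m (setmult m A B) C = setmult m A (setmult m B C)) \<and>
       (\<forall>A\<in>L. setmult m A A = A))"

end

theory Submission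
  imports Defs
begin

lemma sm_iff: "x \<in> setmult m A B \<longleftrightarrow> (\<exists>a\<in>A. \<exists>b\<in>B. x = m a b)"
  unfolding setmult_def by blast

lemma sm_mono: "A' \<subseteq> A \<Longrightarrow> B' \<subseteq> B \<Longrightarrow> setmult m A' B' \<subseteq> setmult m A B"
  unfolding setmult_def by blast

lemma bi_int:
  assumes A: "bi_ideal S m A" and B: "bi_ideal S m B" and ne: "A \<inter> B \<noteq> {}"
  shows "bi_ideal S m (A \<inter> B)"
proof -
  have a: "setmult m (A \<inter> B) (A \<inter> B) \<subseteq> setmult m A A" "setmult m (A \<inter> B) (A \<inter> B) \<subseteq> setmult m B B"
    by (rule sm_mono; auto)+
  have c: "setmult m (A \<inter> B) S \<subseteq> setmult m A S" "setmult m (A \<inter> B) S \<subseteq> setmult m B S"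
    by (rule sm_mono; auto)+
  have b: "setmult m (setmult m (A \<inter> B) S) (A \<inter> B) \<subseteq> setmult m (setmult m A S) A"
     "setmult m (setmult m (A \<inter> B) S) (A \<inter> B) \<subseteq> setmult m (setmult m B S) B"
    by (rule sm_mono[OF c(1)]; auto) (rule sm_mono[OF c(2)]; auto)
  show ?thesis using A B ne a b unfolding bi_ideal_def by blast
qed

lemma medial:
  assumes "AG_groupoid S m" "a\<in>S" "b\<in>S" "c\<in>S" "d\<in>S"
  shows "m (m a b) (m c d) = m (m a c) (m b d)"
proof -
  have cl: "\<And>x y. x\<in>S \<Longrightarrow> y\<in>S \<Longrightarrow> m x y \<in> S" and li: "\<And>x y z. x\<in>S \<Longrightarrow> y\<in>S \<Longrightarrow> z\<in>S \<Longrightarrow> m (m x y) z = m (m z y) x"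
    using assms(1) unfolding AG_groupoid_def by auto
  have "m (m a b) (m c d) = m (m (m c d) b) a" using li[of a b "m c d"] cl assms by blast
  also have "m (m c d) b = m (m b d) c" using li[of c d b] assms by blast
  also have "m (m (m b d) c) a = m (m a c) (m b d)" using li[of "m b d" c a] cl assms by metis
  finally show ?thesis .
qed

lemma perm:
  assumes "AG_groupoid S m" "left_identity S m e" "a\<in>S" "b\<in>S" "c\<in>S"
  shows "m a (m b c) = m b (m a c)"
proof -
  have e: "e \<in> S" "\<And>x. x\<in>S \<Longrightarrow> m e x = x" using assms(2) unfolding left_identity_def by auto
  have "m a (m b c) = m (m e a) (m b c)" using e assms by simp
  also have "\<dots> = m (m e b) (m a c)" using medial[OF assms(1) e(1) assms(3) assms(4) assms(5)] .
  also have "\<dots> = m b (m a c)" using e assms by simp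
  finally show ?thesis .
qed

lemma paramedial:
  assumes "AG_groupoid S m" "left_identity S m e" "a\<in>S" "b\<in>S" "c\<in>S" "d\<in>S"
  shows "m (m a b) (m c d) = m (m d b) (m c a)"
proof -
  have cl: "\<And>x y. x\<in>S \<Longrightarrow> y\<in>S \<Longrightarrow> m x y \<in> S" and li: "\<And>x y z. x\<in>S \<Longrightarrow> y\<in>S \<Longrightarrow> z\<in>S \<Longrightarrow> m (m x y) z = m (m z y) x"
    using assms(1) unfolding AG_groupoid_def by auto
  have "m (m a b) (m c d) = m c (m (m a b) d)" using perm[OF assms(1,2), of "m a b" c d] cl assms by blast
  also have "m (m a b) d = m (m d b) a" using li[of a b d] assms by blast
  also have "m c (m (m d b) a) = m (m d b) (m c a)" using perm[OF assms(1,2), of c "m d b" a] cl assms by blast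
  finally show ?thesis .
qed

lemma sub_left:
  assumes ag: "AG_groupoid S m" and le: "left_identity S m e" and bA: "bi_ideal S m A"
    and AA: "setmult m A A = A" and BS: "B \<subseteq> S"
  shows "setmult m A B \<subseteq> A"
proof
  have cl: "\<And>x y. x\<in>S \<Longrightarrow> y\<in>S \<Longrightarrow> m x y \<in> S" and li: "\<And>x y z. x\<in>S \<Longrightarrow> y\<in>S \<Longrightarrow> z\<in>S \<Longrightarrow> m (m x y) z = m (m z y) x"
    using ag unfolding AG_groupoid_def by auto
  have AS: "A \<subseteq> S" and ASA: "setmult m (setmult m A S) A \<subseteq> A" using bA unfolding bi_ideal_def by auto
  have dec: "\<And>a. a \<in> A \<Longrightarrow> \<exists>a1\<in>A. \<exists>a2\<in>A. a = m a1 a2" using AA sm_iff by metis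
  fix x assume "x \<in> setmult m A B"
  then obtain a b where ab: "a\<in>A" "b\<in>B" "x = m a b" using sm_iff by metis
  obtain a1 a2 where a12: "a1\<in>A" "a2\<in>A" "a = m a1 a2" using dec ab by blast
  obtain a3 a4 where a34: "a3\<in>A" "a4\<in>A" "a2 = m a3 a4" using dec a12 by blast
  have S: "a1\<in>S" "a2\<in>S" "a3\<in>S" "a4\<in>S" "b\<in>S" using AS BS a12 a34 ab by auto
  have "x = m (m b a2) a1" using li[of a1 a2 b] S ab a12 by simp
  also have "m b a2 = m a3 (m b a4)" using perm[OF ag le, of b a3 a4] S a34 by simp
  finally have "x = m (m a3 (m b a4)) a1" .
  moreover have "m (m a3 (m b a4)) a1 \<in> setmult m (setmult m A S) A"
    using a34 a12 S cl sm_iff by metis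
  ultimately show "x \<in> A" using ASA by auto
qed

lemma sub_comm:
  assumes ag: "AG_groupoid S m" and le: "left_identity S m e"
    and AA: "setmult m A A = A" and BB: "setmult m B B = B" and AS: "A \<subseteq> S" and BS: "B \<subseteq> S"
  shows "setmult m A B \<subseteq> setmult m B A"
proof
  fix x assume "x \<in> setmult m A B"
  then obtain a b where ab: "a\<in>A" "b\<in>B" "x = m a b" using sm_iff by metis
  obtain a1 a2 where a12: "a1\<in>A" "a2\<in>A" "a = m a1 a2" using AA sm_iff ab by metis
  obtain b1 b2 where b12: "b1\<in>B" "b2\<in>B" "b = m b1 b2" using BB sm_iff ab by metis
  have S: "a1\<in>S" "a2\<in>S" "b1\<in>S" "b2\<in>S" using AS BS a12 b12 by auto
  have "x = m (m b2 a2) (m b1 a1)" using paramedial[OF ag le, of a1 a2 b1 b2] S ab a12 b12 by simp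
  also have "\<dots> = m (m b2 b1) (m a2 a1)" using medial[OF ag, of b2 a2 b1 a1] S by simp
  finally have "x = m (m b2 b1) (m a2 a1)" .
  moreover have "m b2 b1 \<in> B" "m a2 a1 \<in> A" using BB AA sm_iff a12 b12 by metis+
  ultimately show "x \<in> setmult m B A" using sm_iff by metis
qed

lemma idem_inter:
  assumes ag: "AG_groupoid S m" and le: "left_identity S m e"
    and H: "\<forall>B. bi_ideal S m B \<longrightarrow> setmult m B B = B"
    and A: "bi_ideal S m A" and B: "bi_ideal S m B"
  shows "A \<inter> B = setmult m A B"
proof
  have AA: "setmult m A A = A" and BB: "setmult m B B = B" using H A B by auto
  have AS: "A \<subseteq> S" and BS: "B \<subseteq> S" using A B unfolding bi_ideal_def by auto
  have 1: "setmult m A B \<subseteq> A" using sub_left[OF ag le A AA BS] .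
  have 2: "setmult m B A \<subseteq> B" using sub_left[OF ag le B BB AS] .
  have 3: "setmult m A B \<subseteq> setmult m B A" using sub_comm[OF ag le AA BB AS BS] .
  show sub: "setmult m A B \<subseteq> A \<inter> B" using 1 2 3 by auto
  have ne: "setmult m A B \<noteq> {}" using A B unfolding bi_ideal_def setmult_def by auto
  have "bi_ideal S m (A \<inter> B)" using bi_int[OF A B] sub ne by blast
  then have "setmult m (A \<inter> B) (A \<inter> B) = A \<inter> B" using H by auto
  moreover have "setmult m (A \<inter> B) (A \<inter> B) \<subseteq> setmult m A B" by (rule sm_mono; auto)
  ultimately show "A \<inter> B \<subseteq> setmult m A B" by simp
qed

theorem proposition3:
  fixes S :: "'a set" and m :: "'a \<Rightarrow> 'a \<Rightarrow> 'a"
  assumes "AG_groupoid S m"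
    and "\<exists>e. left_identity S m e"
  shows "((\<forall>B. bi_ideal S m B \<longrightarrow> setmult m B B = B)
          \<longleftrightarrow> (\<forall>A B. bi_ideal S m A \<and> bi_ideal S m B \<longrightarrow> A \<inter> B = setmult m A B))
       \<and> ((\<forall>B. bi_ideal S m B \<longrightarrow> setmult m B B = B)
          \<longleftrightarrow> bi_ideal_semilattice S m)"
proof -
  obtain e where le: "left_identity S m e" using assms(2) by blast
  have I: "(\<forall>B. bi_ideal S m B \<longrightarrow> setmult m B B = B) \<Longrightarrow>
     (\<forall>A B. bi_ideal S m A \<and> bi_ideal S m B \<longrightarrow> A \<inter> B = setmult m A B)"
    using idem_inter[OF assms(1) le] by metis
  have II: "(\<forall>B. bi_ideal S m B \<longrightarrow> setmult m B B = B) \<Longrightarrow> bi_ideal_semilattice S m"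
  proof -
    assume H: "\<forall>B. bi_ideal S m B \<longrightarrow> setmult m B B = B"
    have eq: "\<And>A B. bi_ideal S m A \<Longrightarrow> bi_ideal S m B \<Longrightarrow> setmult m A B = A \<inter> B"
      using idem_inter[OF assms(1) le H] by blast
    have cl: "\<And>A B. bi_ideal S m A \<Longrightarrow> bi_ideal S m B \<Longrightarrow> bi_ideal S m (A \<inter> B)"
    proof -
      fix A B assume A: "bi_ideal S m A" and B: "bi_ideal S m B"
      have "setmult m A B \<noteq> {}" using A B unfolding bi_ideal_def setmult_def by auto
      then have "A \<inter> B \<noteq> {}" using eq A B by auto
      then show "bi_ideal S m (A \<inter> B)" using bi_int[OF A B] by blast
    qed
    show ?thesis unfolding bi_ideal_semilattice_def Let_def
    proof (intro conjI ballI)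
      fix A B assume "A \<in> {B. bi_ideal S m B}" "B \<in> {B. bi_ideal S m B}"
      then have A: "bi_ideal S m A" and B: "bi_ideal S m B" by auto
      show "setmult m A B \<in> {B. bi_ideal S m B}" using eq[OF A B] cl[OF A B] by simp
      show "setmult m A B = setmult m B A" using eq[OF A B] eq[OF B A] by blast
      fix C assume "C \<in> {B. bi_ideal S m B}"
      then have C: "bi_ideal S m C" by auto
      show "setmult m (setmult m A B) C = setmult m A (setmult m B C)"
        using eq[OF A B] eq[OF B C] eq[OF cl[OF A B] C] eq[OF A cl[OF B C]] by (simp add: Int_assoc)
    next
      fix A assume "A \<in> {B. bi_ideal S m B}"
      then show "setmult m A A = A" using H by auto
    qed
  qed
  have III: "bi_ideal_semilattice S m \<Longrightarrow> (\<forall>B. bi_ideal S m B \<longrightarrow> setmult m B B = B)"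
    unfolding bi_ideal_semilattice_def Let_def by simp
  have IV: "(\<forall>A B. bi_ideal S m A \<and> bi_ideal S m B \<longrightarrow> A \<inter> B = setmult m A B) \<Longrightarrow>
     (\<forall>B. bi_ideal S m B \<longrightarrow> setmult m B B = B)" by auto
  show ?thesis using I II III IV by (intro conjI iffI) (assumption | simp)+
qed

end
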